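(* Let $S=\{s_1<\dots<s_{k_1}\}$ and $T=\{t_1<\dots<t_{k_2}\}$ be nonempty subsets of $\{1,\dots,n-1\}$ with $\max S+\min T\le n$ and $\min S+\max T\le n$, and let $D$ be the digraph of $T_n\langle S;T\rangle$. Let $v$ be a vertex of $D$ and let $a_2,\dots,a_{k_1},b_2,\dots,b_{k_2}$ be nonnegative integers. Then: (a) there is a directed walk $W$ in $D$ starting from $v$, of length $\ell$, containing exactly $a_i$ $s_i$-arcs and exactly $b_j$ $t_j$-arcs for each $2\le i\le k_1$ and $2\le j\le k_2$, where $$\ell\le\Big(\sum_{i=2}^{k_1}a_i+\sum_{j=2}^{k_2}b_j\Big)\Big(\max\Big\{\Big\lceil\tfrac{t_{k_2}}{s_1}\Big\rceil,\Big\lceil\tfrac{s_{k_1}}{t_1}\Big\rceil\Big\}+1\Big);$$ (b) for such a walk $W$, let $a_1$ and $b_1$ be the numbers of $s_1$-arcs and $t_1$-arcs in $W$. If integers $a\ge a_1$ and $b\ge b_1$ satisfy $$1\le v+as_1+\sum_{i=2}^{k_1}a_is_i-bt_1-\sum_{j=2}^{k_2}b_jt_j\le n,$$ then there is a directed walk in $D$ starting from $v$ containing exactly $a$ $s_1$-arcs, exactly $b$ $t_1$-arcs, and exactly $a_i$ $s_i$-arcs and $b_j$ $t_j$-arcs for all $2\le i\le k_1$, $2\le j\le k_2$.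
   Context: $T_n\langle S;T\rangle$ is the $n\times n$ $(0,1)$-matrix whose $(i,j)$-entry is $1$ iff $j-i\in S$ or $i-j\in T$; its digraph $D$ has vertex set $[n]$ and arc $(i,j)$ iff that entry is $1$. An arc $u\to v$ of $D$ is an $s_i$-arc if $v-u=s_i$, and a $t_j$-arc if $u-v=t_j$. *)

theory Defs
  imports Complex_Main
begin

definition is_arc :: "nat \<Rightarrow> nat set \<Rightarrow> nat set \<Rightarrow> int \<Rightarrow> int \<Rightarrow> bool" where
  "is_arc n S T i j \<longleftrightarrow> i \<in> {1..int n} \<and> j \<in> {1..int n} \<and>
      (j - i \<in> int ` S \<or> i - j \<in> int ` T)"

definition is_walk :: "nat \<Rightarrow> nat set \<Rightarrow> nat set \<Rightarrow> int \<Rightarrow> int list \<Rightarrow> bool" where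
  "is_walk n S T v W \<longleftrightarrow> W \<noteq> [] \<and> hd W = v \<and> v \<in> {1..int n} \<and>
      (\<forall>k. Suc k < length W \<longrightarrow> is_arc n S T (W ! k) (W ! Suc k))"

definition walk_len :: "int list \<Rightarrow> nat" where
  "walk_len W = length W - 1"

definition num_s_arcs :: "int list \<Rightarrow> nat \<Rightarrow> nat" where
  "num_s_arcs W s = card {k. Suc k < length W \<and> W ! Suc k - W ! k = int s}"

definition num_t_arcs :: "int list \<Rightarrow> nat \<Rightarrow> nat" where
  "num_t_arcs W t = card {k. Suc k < length W \<and> W ! k - W ! Suc k = int t}"

end

theory Submission
  imports Defs
begin

fun pth :: "int \<Rightarrow> int list \<Rightarrow> int list" where
  "pth u [] = [u]"
| "pth u (d # ds) = u # pth (u + d) ds"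

fun wok :: "nat \<Rightarrow> nat set \<Rightarrow> nat set \<Rightarrow> int \<Rightarrow> int list \<Rightarrow> bool" where
  "wok n S T u [] = (1 \<le> u \<and> u \<le> int n)"
| "wok n S T u (d # ds) = (1 \<le> u \<and> u \<le> int n \<and> (d \<in> int ` S \<or> - d \<in> int ` T) \<and> wok n S T (u + d) ds)"

fun diffs :: "int list \<Rightarrow> int list" where
  "diffs (x # y # r) = (y - x) # diffs (y # r)"
| "diffs _ = []"

definition cnt :: "int list \<Rightarrow> int \<Rightarrow> nat" where
  "cnt ds x = length (filter (\<lambda>d. d = x) ds)"

lemma cnt_simps[simp]: "cnt [] x = 0" "cnt (d # ds) x = (if d = x then 1 else 0) + cnt ds x"
  "cnt (ds @ es) x = cnt ds x + cnt es x" "cnt (replicate m y) x = (if y = x then m else 0)"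
  by (auto simp: cnt_def)

lemma length_pth[simp]: "length (pth u ds) = Suc (length ds)"
  by (induction ds arbitrary: u) auto

lemma hd_pth[simp]: "hd (pth u ds) = u"
  by (cases ds) auto

lemma pth_ne[simp]: "pth u ds \<noteq> []"
  by (cases ds) auto

lemma last_pth: "last (pth u ds) = u + sum_list ds"
  by (induction ds arbitrary: u) (auto simp: algebra_simps)

lemma nth_pth0[simp]: "pth u ds ! 0 = u"
  by (cases ds) auto

lemma pth_diff: "k < length ds \<Longrightarrow> pth u ds ! Suc k - pth u ds ! k = ds ! k"
proof (induction ds arbitrary: u k)
  case Nil then show ?case by simp
next
  case (Cons d ds)
  show ?case
  proof (cases k)
    case 0 then show ?thesis by simp
  next
    case (Suc j) then show ?thesis using Cons by simp
  qed
qed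

lemma wok_range: "wok n S T u ds \<Longrightarrow> 1 \<le> u \<and> u \<le> int n"
  by (cases ds) auto

lemma wok_append: "wok n S T u (ds @ es) \<longleftrightarrow> wok n S T u ds \<and> wok n S T (u + sum_list ds) es"
  by (induction ds arbitrary: u) (auto simp: algebra_simps dest: wok_range)

lemma wok_arcs: "wok n S T u ds \<Longrightarrow> k < length ds \<Longrightarrow> is_arc n S T (pth u ds ! k) (pth u ds ! Suc k)"
proof (induction ds arbitrary: u k)
  case Nil then show ?case by simp
next
  case (Cons d ds)
  show ?case
  proof (cases k)
    case 0
    have e: "pth u (d#ds) ! k = u" "pth u (d#ds) ! Suc k = u + d" "u + d - u = d" "u - (u + d) = - d"
      using 0 by simp_all
    have w: "1 \<le> u" "u \<le> int n" "d \<in> int ` S \<or> - d \<in> int ` T" "wok n S T (u + d) ds"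
      using Cons.prems(1) by simp_all
    have "1 \<le> u + d \<and> u + d \<le> int n" using wok_range[OF w(4)] .
    then show ?thesis unfolding is_arc_def e using w(1,2,3) by simp
  next
    case (Suc j)
    have "wok n S T (u+d) ds" "j < length ds" using Cons.prems Suc by simp_all
    from Cons.IH[OF this] show ?thesis using Suc by simp
  qed
qed

lemma wok_walk: assumes "wok n S T u ds" shows "is_walk n S T u (pth u ds)"
proof -
  have a: "\<forall>k. Suc k < length (pth u ds) \<longrightarrow> is_arc n S T (pth u ds ! k) (pth u ds ! Suc k)"
    using wok_arcs[OF assms] by simp
  have "u \<in> {1..int n}" using wok_range[OF assms] by simp
  then show ?thesis unfolding is_walk_def using a by simp
qed

lemma walk_wok: "W \<noteq> [] \<Longrightarrow> hd W \<in> {1..int n} \<Longrightarrow> (\<forall>k. Suc k < length W \<longrightarrow> is_arc n S T (W ! k) (W ! Suc k))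
   \<Longrightarrow> wok n S T (hd W) (diffs W) \<and> pth (hd W) (diffs W) = W"
proof (induction W rule: diffs.induct)
  case (1 x y r)
  have a: "is_arc n S T x y" using "1.prems"(3)[rule_format, of 0] by simp
  have b: "\<forall>k. Suc k < length (y # r) \<longrightarrow> is_arc n S T ((y#r) ! k) ((y#r) ! Suc k)"
    using "1.prems"(3) by fastforce
  have "wok n S T y (diffs (y # r)) \<and> pth y (diffs (y # r)) = y # r"
    using "1.IH" b a by (auto simp: is_arc_def)
  then show ?case using a by (auto simp: is_arc_def)
next
  case ("2_1") then show ?case by simp
next
  case ("2_2" x) then show ?case by simp
qed

lemma is_walk_wok: "is_walk n S T v W \<Longrightarrow> wok n S T v (diffs W) \<and> pth v (diffs W) = W"
  unfolding is_walk_def using walk_wok[of W n S T] by auto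

lemma num_s_pth: "num_s_arcs (pth u ds) s = cnt ds (int s)"
proof -
  have "{k. Suc k < length (pth u ds) \<and> pth u ds ! Suc k - pth u ds ! k = int s} = {k. k < length ds \<and> ds ! k = int s}"
    using pth_diff[of _ ds u] by auto
  then show ?thesis by (simp add: num_s_arcs_def cnt_def length_filter_conv_card)
qed

lemma num_t_pth: "num_t_arcs (pth u ds) t = cnt ds (- int t)"
proof -
  have "{k. Suc k < length (pth u ds) \<and> pth u ds ! k - pth u ds ! Suc k = int t} = {k. k < length ds \<and> ds ! k = - int t}"
    using pth_diff[of _ ds u] by force
  then show ?thesis by (simp add: num_t_arcs_def cnt_def length_filter_conv_card)
qed

lemma walk_len_pth[simp]: "walk_len (pth u ds) = length ds"
  by (simp add: walk_len_def)

lemma sum_list_cnt: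
  assumes "finite S" "finite T" "\<forall>s\<in>S. s > 0" "\<forall>t\<in>T. t > 0"
  shows "set ds \<subseteq> int ` S \<union> uminus ` int ` T \<Longrightarrow>
    sum_list ds = (\<Sum>s\<in>S. int (cnt ds (int s)) * int s) - (\<Sum>t\<in>T. int (cnt ds (- int t)) * int t)"
proof (induction ds)
  case Nil then show ?case by simp
next
  case (Cons d ds)
  then have IH: "sum_list ds = (\<Sum>s\<in>S. int (cnt ds (int s)) * int s) - (\<Sum>t\<in>T. int (cnt ds (- int t)) * int t)"
    by auto
  from Cons.prems have "d \<in> int ` S \<or> d \<in> uminus ` int ` T" by auto
  then show ?case
  proof
    assume "d \<in> int ` S"
    then obtain s0 where s0: "s0 \<in> S" "d = int s0" by auto
    have "(\<Sum>s\<in>S. int (cnt (d#ds) (int s)) * int s) = (\<Sum>s\<in>S. int (cnt ds (int s)) * int s + (if s = s0 then int s else 0))"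
      using s0 by (intro sum.cong) (auto simp: algebra_simps)
    also have "\<dots> = (\<Sum>s\<in>S. int (cnt ds (int s)) * int s) + int s0"
      using s0 assms(1) by (simp add: sum.distrib sum.delta)
    finally have e1: "(\<Sum>s\<in>S. int (cnt (d#ds) (int s)) * int s) = (\<Sum>s\<in>S. int (cnt ds (int s)) * int s) + int s0" .
    have e2: "(\<Sum>t\<in>T. int (cnt (d#ds) (- int t)) * int t) = (\<Sum>t\<in>T. int (cnt ds (- int t)) * int t)"
      using s0 assms by (intro sum.cong) auto
    show ?thesis using IH e1 e2 s0 by simp
  next
    assume "d \<in> uminus ` int ` T"
    then obtain t0 where t0: "t0 \<in> T" "d = - int t0" by auto
    have "(\<Sum>t\<in>T. int (cnt (d#ds) (- int t)) * int t) = (\<Sum>t\<in>T. int (cnt ds (- int t)) * int t + (if t = t0 then int t else 0))"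
      using t0 by (intro sum.cong) (auto simp: algebra_simps)
    also have "\<dots> = (\<Sum>t\<in>T. int (cnt ds (- int t)) * int t) + int t0"
      using t0 assms(2) by (simp add: sum.distrib sum.delta)
    finally have e1: "(\<Sum>t\<in>T. int (cnt (d#ds) (- int t)) * int t) = (\<Sum>t\<in>T. int (cnt ds (- int t)) * int t) + int t0" .
    have e2: "(\<Sum>s\<in>S. int (cnt (d#ds) (int s)) * int s) = (\<Sum>s\<in>S. int (cnt ds (int s)) * int s)"
      using t0 assms by (intro sum.cong) auto
    show ?thesis using IH e1 e2 t0 by simp
  qed
qed

lemma wok_steps: "wok n S T u ds \<Longrightarrow> set ds \<subseteq> int ` S \<union> uminus ` int ` T"
  by (induction ds arbitrary: u) (auto simp: image_iff, metis minus_minus)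

lemma greedy:
  assumes "s1 \<in> S" "t1 \<in> T" "s1 > 0" "t1 > 0" "s1 + t1 \<le> n"
  shows "1 \<le> u \<Longrightarrow> u \<le> int n \<Longrightarrow> 1 \<le> u + int x * int s1 - int y * int t1 \<Longrightarrow>
     u + int x * int s1 - int y * int t1 \<le> int n \<Longrightarrow>
     \<exists>ds. wok n S T u ds \<and> cnt ds (int s1) = x \<and> cnt ds (- int t1) = y \<and> set ds \<subseteq> {int s1, - int t1}"
proof (induction "x + y" arbitrary: u x y)
  case 0 then show ?case by (intro exI[of _ "[]"]) auto
next
  case (Suc k)
  have ne: "int s1 \<noteq> - int t1" using assms by simp
  show ?case
  proof (cases "x > 0 \<and> u + int s1 \<le> int n")
    case True
    then obtain x' where x': "x = Suc x'" by (cases x) auto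
    from Suc.hyps(1)[of x' y "u + int s1"] Suc.prems Suc.hyps(2) True x' assms
    obtain ds where "wok n S T (u + int s1) ds" "cnt ds (int s1) = x'" "cnt ds (- int t1) = y" "set ds \<subseteq> {int s1, - int t1}"
      by (auto simp: algebra_simps)
    then show ?thesis using True x' Suc.prems assms ne
      by (intro exI[of _ "int s1 # ds"]) auto
  next
    case False
    have y0: "y > 0"
    proof (rule ccontr)
      assume "\<not> y > 0"
      then have "y = 0" by simp
      then have "x > 0" using Suc.hyps(2) by simp
      then have "int x * int s1 \<ge> int s1" using mult_right_mono[of 1 "int x" "int s1"] by simp
      then show False using False Suc.prems \<open>y = 0\<close> \<open>x > 0\<close> by simp
    qed
    then obtain y' where y': "y = Suc y'" by (cases y) auto
    have ut: "u - int t1 \<ge> 1"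
    proof (cases "x > 0")
      case True then show ?thesis using False assms by simp
    next
      case False
      have "0 \<le> int t1 * int y'" by simp
      moreover have "1 + (int t1 + int t1 * int y') \<le> u" using False Suc.prems y' by (simp add: algebra_simps)
      ultimately show ?thesis by linarith
    qed
    from Suc.hyps(1)[of x y' "u - int t1"] Suc.prems Suc.hyps(2) ut y' assms
    obtain ds where "wok n S T (u - int t1) ds" "cnt ds (int s1) = x" "cnt ds (- int t1) = y'" "set ds \<subseteq> {int s1, - int t1}"
      by (auto simp: algebra_simps)
    moreover have "int t1 \<in> int ` T" using assms by simp
    moreover have "u + - int t1 = u - int t1" by simp
    ultimately have "wok n S T u (- int t1 # ds)" using Suc.prems by (simp only: wok.simps) simp
    then show ?thesis using y' ne \<open>cnt ds (int s1) = x\<close> \<open>cnt ds (- int t1) = y'\<close> \<open>set ds \<subseteq> {int s1, - int t1}\<close> assms(4)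
      by (intro exI[of _ "- int t1 # ds"]) simp
  qed
qed

lemma down:
  assumes "t1 \<in> T" "t1 > 0" "int t1 \<le> h"
  shows "1 \<le> u \<Longrightarrow> u \<le> int n \<Longrightarrow> \<exists>m. wok n S T u (replicate m (- int t1)) \<and> u - int m * int t1 \<le> h
     \<and> 1 \<le> u - int m * int t1 \<and> int m * int t1 < max (u - h) 0 + int t1"
proof (induction "nat u" arbitrary: u rule: less_induct)
  case less
  show ?case
  proof (cases "u \<le> h")
    case True
    then show ?thesis using less.prems assms by (intro exI[of _ 0]) auto
  next
    case False
    then have u1: "1 \<le> u - int t1" using assms by simp
    have "nat (u - int t1) < nat u" using assms u1 by simp
    from less.hyps[OF this u1] less.prems
    obtain m where m: "wok n S T (u - int t1) (replicate m (- int t1))" "u - int t1 - int m * int t1 \<le> h"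
      "1 \<le> u - int t1 - int m * int t1" "int m * int t1 < max (u - int t1 - h) 0 + int t1" by auto
    have tT: "int t1 \<in> int ` T" using assms by simp
    have w: "wok n S T u (replicate (Suc m) (- int t1))" using m(1) tT less.prems by simp
    have "int (Suc m) * int t1 < max (u - h) 0 + int t1"
    proof (cases "u - int t1 - h \<ge> 0")
      case True then show ?thesis using m(4) False by (simp add: algebra_simps)
    next
      case False
      then have "int m * int t1 < int t1" using m(4) by simp
      then have "m = 0" using mult_right_mono[of 1 "int m" "int t1"] by (cases m) auto
      then show ?thesis using \<open>\<not> u \<le> h\<close> by simp
    qed
    then show ?thesis using w m by (intro exI[of _ "Suc m"]) (auto simp: algebra_simps)
  qed
qed

lemma up:
  assumes "s1 \<in> S" "s1 > 0" "lo \<le> int n - int s1 + 1"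
  shows "1 \<le> u \<Longrightarrow> u \<le> int n \<Longrightarrow> \<exists>m. wok n S T u (replicate m (int s1)) \<and> lo \<le> u + int m * int s1
     \<and> u + int m * int s1 \<le> int n \<and> int m * int s1 < max (lo - u) 0 + int s1"
proof (induction "nat (int n - u)" arbitrary: u rule: less_induct)
  case less
  show ?case
  proof (cases "lo \<le> u")
    case True
    then show ?thesis using less.prems assms by (intro exI[of _ 0]) auto
  next
    case False
    then have u1: "u + int s1 \<le> int n" using assms by simp
    have "nat (int n - (u + int s1)) < nat (int n - u)" using assms u1 by simp
    from less.hyps[OF this _ u1] less.prems assms
    obtain m where m: "wok n S T (u + int s1) (replicate m (int s1))" "lo \<le> u + int s1 + int m * int s1"
      "u + int s1 + int m * int s1 \<le> int n" "int m * int s1 < max (lo - (u + int s1)) 0 + int s1" by auto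
    have sS: "int s1 \<in> int ` S" using assms by simp
    have w: "wok n S T u (replicate (Suc m) (int s1))" using m(1) sS less.prems by simp
    have "int (Suc m) * int s1 < max (lo - u) 0 + int s1"
    proof (cases "lo - (u + int s1) \<ge> 0")
      case True then show ?thesis using m(4) False by (simp add: algebra_simps)
    next
      case False
      then have "int m * int s1 < int s1" using m(4) by simp
      then have "m = 0" using mult_right_mono[of 1 "int m" "int s1"] by (cases m) auto
      then show ?thesis using \<open>\<not> lo \<le> u\<close> by simp
    qed
    then show ?thesis using w m by (intro exI[of _ "Suc m"]) (auto simp: algebra_simps)
  qed
qed

lemma ceil_bound:
  assumes "t > 0" "int m * int t < int M + int t"
  shows "int m \<le> \<lceil>real M / real t\<rceil>"
proof -
  have "m * t < M + t" using assms(2) unfolding of_nat_mult[symmetric] of_nat_add[symmetric] of_nat_less_iff .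
  then have "real (m * t) < real (M + t)" by (simp only: of_nat_less_iff)
  then have "real m * real t < real M + real t" by simp
  then have "real m < real M / real t + 1" using assms(1) by (simp add: field_simps)
  moreover have "real M / real t \<le> of_int \<lceil>real M / real t\<rceil>" by (rule le_of_int_ceiling)
  ultimately have "real_of_int (int m) < real_of_int (\<lceil>real M / real t\<rceil> + 1)"
    unfolding of_int_of_nat_eq of_int_add of_int_1 by linarith
  then have "int m < \<lceil>real M / real t\<rceil> + 1" by (simp only: of_int_less_iff)
  then show ?thesis by linarith
qed

lemma build:
  assumes s1S: "s1 \<in> S" and t1T: "t1 \<in> T" and s1p: "s1 > 0" and t1p: "t1 > 0"
    and Sb: "\<forall>s\<in>S. 1 \<le> s \<and> s \<le> MS" and Tb: "\<forall>t\<in>T. 1 \<le> t \<and> t \<le> MT"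
    and MS: "MS + t1 \<le> n" and MT: "s1 + MT \<le> n"
    and c: "c = nat (max \<lceil>real MT / real s1\<rceil> \<lceil>real MS / real t1\<rceil>)"
  shows "set R \<subseteq> int ` (S - {s1}) \<union> uminus ` int ` (T - {t1}) \<Longrightarrow> 1 \<le> u \<Longrightarrow> u \<le> int n \<Longrightarrow>
    \<exists>ds. wok n S T u ds \<and> (\<forall>x. x \<noteq> int s1 \<longrightarrow> x \<noteq> - int t1 \<longrightarrow> cnt ds x = cnt R x)
       \<and> length ds \<le> length R * (c + 1)"
proof (induction R arbitrary: u)
  case Nil then show ?case by (intro exI[of _ "[]"]) auto
next
  case (Cons r R)
  from Cons.prems(1) have "r \<in> int ` (S - {s1}) \<or> r \<in> uminus ` int ` (T - {t1})" by auto
  then show ?case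
  proof
    assume "r \<in> int ` (S - {s1})"
    then obtain s where s: "s \<in> S" "s \<noteq> s1" "r = int s" by auto
    have sb: "1 \<le> s" "s \<le> MS" using Sb s by auto
    have h: "int t1 \<le> int n - int s" using sb MS by simp
    from down[OF t1T t1p h, where u=u and S=S and n=n] Cons.prems
    obtain m where m: "wok n S T u (replicate m (- int t1))" "u - int m * int t1 \<le> int n - int s"
      "1 \<le> u - int m * int t1" "int m * int t1 < max (u - (int n - int s)) 0 + int t1" by auto
    define w where "w = u - int m * int t1"
    have "1 \<le> w + int s" "w + int s \<le> int n" using m sb unfolding w_def by auto
    from Cons.IH[OF _ this] Cons.prems(1)
    obtain ds where ds: "wok n S T (w + int s) ds" "\<forall>x. x \<noteq> int s1 \<longrightarrow> x \<noteq> - int t1 \<longrightarrow> cnt ds x = cnt R x"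
      "length ds \<le> length R * (c + 1)" by auto
    have "int m * int t1 < int MS + int t1" using m(4) sb Cons.prems by linarith
    then have "int m \<le> \<lceil>real MS / real t1\<rceil>" using ceil_bound t1p by blast
    then have mc: "m \<le> c" unfolding c by linarith
    have sS: "int s \<in> int ` S" using s by simp
    have wk: "wok n S T u (replicate m (- int t1) @ int s # ds)"
      unfolding wok_append using m ds sS sum_list_replicate[of m "- int t1"] unfolding w_def by (simp add: algebra_simps)
    have "\<forall>x. x \<noteq> int s1 \<longrightarrow> x \<noteq> - int t1 \<longrightarrow> cnt (replicate m (- int t1) @ int s # ds) x = cnt (r # R) x"
      using ds(2) s by simp
    moreover have "length (replicate m (- int t1) @ int s # ds) \<le> length (r # R) * (c + 1)"
      using mc ds(3) by simp
    ultimately show ?thesis using wk by blast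
  next
    assume "r \<in> uminus ` int ` (T - {t1})"
    then obtain t where t: "t \<in> T" "t \<noteq> t1" "r = - int t" by auto
    have tb: "1 \<le> t" "t \<le> MT" using Tb t by auto
    have h: "int t + 1 \<le> int n - int s1 + 1" using tb MT by simp
    from up[OF s1S s1p h, where u=u and T=T] Cons.prems
    obtain m where m: "wok n S T u (replicate m (int s1))" "int t + 1 \<le> u + int m * int s1"
      "u + int m * int s1 \<le> int n" "int m * int s1 < max (int t + 1 - u) 0 + int s1" by auto
    define w where "w = u + int m * int s1"
    have "1 \<le> w - int t" "w - int t \<le> int n" using m tb unfolding w_def by auto
    from Cons.IH[OF _ this] Cons.prems(1)
    obtain ds where ds: "wok n S T (w - int t) ds" "\<forall>x. x \<noteq> int s1 \<longrightarrow> x \<noteq> - int t1 \<longrightarrow> cnt ds x = cnt R x"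
      "length ds \<le> length R * (c + 1)" by auto
    have "int m * int s1 < int MT + int s1" using m(4) tb Cons.prems by linarith
    then have "int m \<le> \<lceil>real MT / real s1\<rceil>" using ceil_bound s1p by blast
    then have mc: "m \<le> c" unfolding c by linarith
    have tT: "int t \<in> int ` T" using t by simp
    have wk: "wok n S T u (replicate m (int s1) @ (- int t) # ds)"
      unfolding wok_append using m ds tT sum_list_replicate[of m "int s1"] unfolding w_def by (simp add: algebra_simps)
    have "\<forall>x. x \<noteq> int s1 \<longrightarrow> x \<noteq> - int t1 \<longrightarrow> cnt (replicate m (int s1) @ (- int t) # ds) x = cnt (r # R) x"
      using ds(2) t by simp
    moreover have "length (replicate m (int s1) @ (- int t) # ds) \<le> length (r # R) * (c + 1)"
      using mc ds(3) by simp
    ultimately show ?thesis using wk by blast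
  qed
qed

lemma mkR: "finite X \<Longrightarrow> \<exists>R. set R \<subseteq> X \<and> (\<forall>x\<in>X. cnt R x = f x) \<and> length R = sum f X"
proof (induction X rule: finite_induct)
  case empty then show ?case by (intro exI[of _ "[]"]) auto
next
  case (insert x X)
  then obtain R where R: "set R \<subseteq> X" "\<forall>y\<in>X. cnt R y = f y" "length R = sum f X" by auto
  have "cnt R x = 0" using R(1) insert(2) by (auto simp: cnt_def filter_empty_conv)
  then show ?case using R insert by (intro exI[of _ "replicate (f x) x @ R"]) auto
qed

theorem theorem3p3:
  fixes n :: nat and S T :: "nat set" and v :: int and a b :: "nat \<Rightarrow> nat"
  assumes "S \<subseteq> {1..n-1}" and "S \<noteq> {}"
    and "T \<subseteq> {1..n-1}" and "T \<noteq> {}"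
    and "Max S + Min T \<le> n" and "Min S + Max T \<le> n"
    and "v \<in> {1..int n}"
  shows
   "(\<exists>W. is_walk n S T v W
        \<and> (\<forall>s\<in>S - {Min S}. num_s_arcs W s = a s)
        \<and> (\<forall>t\<in>T - {Min T}. num_t_arcs W t = b t)
        \<and> walk_len W \<le> ((\<Sum>s\<in>S - {Min S}. a s) + (\<Sum>t\<in>T - {Min T}. b t)) *
              (nat (max \<lceil>real (Max T) / real (Min S)\<rceil> \<lceil>real (Max S) / real (Min T)\<rceil>) + 1))
    \<and>
    (\<forall>W. (is_walk n S T v W
          \<and> (\<forall>s\<in>S - {Min S}. num_s_arcs W s = a s)
          \<and> (\<forall>t\<in>T - {Min T}. num_t_arcs W t = b t)
          \<and> walk_len W \<le> ((\<Sum>s\<in>S - {Min S}. a s) + (\<Sum>t\<in>T - {Min T}. b t)) *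
              (nat (max \<lceil>real (Max T) / real (Min S)\<rceil> \<lceil>real (Max S) / real (Min T)\<rceil>) + 1))
      \<longrightarrow> (\<forall>A B :: nat. num_s_arcs W (Min S) \<le> A \<and> num_t_arcs W (Min T) \<le> B
            \<and> 1 \<le> v + int A * int (Min S) + (\<Sum>s\<in>S - {Min S}. int (a s) * int s)
                   - int B * int (Min T) - (\<Sum>t\<in>T - {Min T}. int (b t) * int t)
            \<and> v + int A * int (Min S) + (\<Sum>s\<in>S - {Min S}. int (a s) * int s)
                   - int B * int (Min T) - (\<Sum>t\<in>T - {Min T}. int (b t) * int t) \<le> int n
          \<longrightarrow> (\<exists>W'. is_walk n S T v W'
                \<and> num_s_arcs W' (Min S) = A \<and> num_t_arcs W' (Min T) = B
                \<and> (\<forall>s\<in>S - {Min S}. num_s_arcs W' s = a s)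
                \<and> (\<forall>t\<in>T - {Min T}. num_t_arcs W' t = b t))))"
proof -
  define s1 where "s1 = Min S"
  define t1 where "t1 = Min T"
  define c where "c = nat (max \<lceil>real (Max T) / real s1\<rceil> \<lceil>real (Max S) / real t1\<rceil>)"
  have fS: "finite S" using assms(1) finite_subset by blast
  have fT: "finite T" using assms(3) finite_subset by blast
  have s1S: "s1 \<in> S" unfolding s1_def using fS assms(2) by simp
  have t1T: "t1 \<in> T" unfolding t1_def using fT assms(4) by simp
  have Sb: "\<forall>s\<in>S. 1 \<le> s \<and> s \<le> Max S" using assms(1) fS by auto
  have Tb: "\<forall>t\<in>T. 1 \<le> t \<and> t \<le> Max T" using assms(3) fT by auto
  have s1p: "s1 > 0" using Sb s1S by force
  have t1p: "t1 > 0" using Tb t1T by force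
  have MS: "Max S + t1 \<le> n" using assms(5) t1_def by simp
  have MT: "s1 + Max T \<le> n" using assms(6) s1_def by simp
  have S0: "\<forall>s\<in>S. s > 0" and T0: "\<forall>t\<in>T. t > 0" using Sb Tb by auto
  have vr: "1 \<le> v" "v \<le> int n" using assms(7) by auto
  note bld = build[OF s1S t1T s1p t1p Sb Tb MS MT c_def]
  have partA: "\<exists>W. is_walk n S T v W
        \<and> (\<forall>s\<in>S - {Min S}. num_s_arcs W s = a s)
        \<and> (\<forall>t\<in>T - {Min T}. num_t_arcs W t = b t)
        \<and> walk_len W \<le> ((\<Sum>s\<in>S - {Min S}. a s) + (\<Sum>t\<in>T - {Min T}. b t)) * (c + 1)"
  proof -
    define X where "X = int ` (S - {s1}) \<union> uminus ` int ` (T - {t1})"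
    define f where "f d = (if d > 0 then a (nat d) else b (nat (- d)))" for d :: int
    have fX: "finite X" unfolding X_def using fS fT by simp
    obtain R where R: "set R \<subseteq> X" "\<forall>x\<in>X. cnt R x = f x" "length R = sum f X"
      using mkR[OF fX] by blast
    have "sum f X = sum f (int ` (S - {s1})) + sum f (uminus ` int ` (T - {t1}))"
      unfolding X_def using fS fT S0 T0 by (intro sum.union_disjoint) auto
    also have "sum f (int ` (S - {s1})) = (\<Sum>s\<in>S - {s1}. a s)"
      using S0 by (subst sum.reindex) (auto simp: f_def intro!: sum.cong)
    also have "sum f (uminus ` int ` (T - {t1})) = (\<Sum>t\<in>T - {t1}. b t)"
      using T0 unfolding image_image by (subst sum.reindex) (auto simp: f_def inj_on_def intro!: sum.cong)
    finally have lenR: "length R = (\<Sum>s\<in>S - {s1}. a s) + (\<Sum>t\<in>T - {t1}. b t)" using R(3) by simp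
    obtain ds where ds: "wok n S T v ds" "\<forall>x. x \<noteq> int s1 \<longrightarrow> x \<noteq> - int t1 \<longrightarrow> cnt ds x = cnt R x"
       "length ds \<le> length R * (c + 1)"
      using bld[of R v] R(1) vr unfolding X_def by auto
    show ?thesis
    proof (intro exI[of _ "pth v ds"] conjI ballI)
      show "is_walk n S T v (pth v ds)" using wok_walk ds(1) by blast
    next
      fix s assume s: "s \<in> S - {Min S}"
      then have "int s \<in> X" "int s \<noteq> int s1" "int s \<noteq> - int t1" using S0 t1p unfolding X_def s1_def by auto
      then show "num_s_arcs (pth v ds) s = a s" using ds(2) R(2) S0 s by (simp add: num_s_pth f_def)
    next
      fix t assume t: "t \<in> T - {Min T}"
      then have "- int t \<in> X" "- int t \<noteq> int s1" "- int t \<noteq> - int t1" using T0 s1p unfolding X_def t1_def by auto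
      then show "num_t_arcs (pth v ds) t = b t" using ds(2) R(2) T0 t by (simp add: num_t_pth f_def)
    next
      show "walk_len (pth v ds) \<le> ((\<Sum>s\<in>S - {Min S}. a s) + (\<Sum>t\<in>T - {Min T}. b t)) * (c + 1)"
        using ds(3) lenR unfolding s1_def t1_def by simp
    qed
  qed
  have partB: "\<forall>A B :: nat. num_s_arcs W (Min S) \<le> A \<and> num_t_arcs W (Min T) \<le> B
            \<and> 1 \<le> v + int A * int (Min S) + (\<Sum>s\<in>S - {Min S}. int (a s) * int s)
                   - int B * int (Min T) - (\<Sum>t\<in>T - {Min T}. int (b t) * int t)
            \<and> v + int A * int (Min S) + (\<Sum>s\<in>S - {Min S}. int (a s) * int s)
                   - int B * int (Min T) - (\<Sum>t\<in>T - {Min T}. int (b t) * int t) \<le> int n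
          \<longrightarrow> (\<exists>W'. is_walk n S T v W'
                \<and> num_s_arcs W' (Min S) = A \<and> num_t_arcs W' (Min T) = B
                \<and> (\<forall>s\<in>S - {Min S}. num_s_arcs W' s = a s)
                \<and> (\<forall>t\<in>T - {Min T}. num_t_arcs W' t = b t))"
    if W: "is_walk n S T v W" "\<forall>s\<in>S - {Min S}. num_s_arcs W s = a s" "\<forall>t\<in>T - {Min T}. num_t_arcs W t = b t"
    for W
  proof (intro allI impI)
    fix A B :: nat
    assume H: "num_s_arcs W (Min S) \<le> A \<and> num_t_arcs W (Min T) \<le> B
            \<and> 1 \<le> v + int A * int (Min S) + (\<Sum>s\<in>S - {Min S}. int (a s) * int s)
                   - int B * int (Min T) - (\<Sum>t\<in>T - {Min T}. int (b t) * int t)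
            \<and> v + int A * int (Min S) + (\<Sum>s\<in>S - {Min S}. int (a s) * int s)
                   - int B * int (Min T) - (\<Sum>t\<in>T - {Min T}. int (b t) * int t) \<le> int n"
    define ds0 where "ds0 = diffs W"
    have w0: "wok n S T v ds0" "pth v ds0 = W" using is_walk_wok[OF W(1)] unfolding ds0_def by auto
    have cs: "cnt ds0 (int s) = num_s_arcs W s" for s using num_s_pth[of v ds0 s] w0(2) by simp
    have ct: "cnt ds0 (- int t) = num_t_arcs W t" for t using num_t_pth[of v ds0 t] w0(2) by simp
    define a1 where "a1 = cnt ds0 (int s1)"
    define b1 where "b1 = cnt ds0 (- int t1)"
    have sl: "sum_list ds0 = (\<Sum>s\<in>S. int (cnt ds0 (int s)) * int s) - (\<Sum>t\<in>T. int (cnt ds0 (- int t)) * int t)"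
      using sum_list_cnt[OF fS fT S0 T0 wok_steps[OF w0(1)]] .
    have "(\<Sum>s\<in>S. int (cnt ds0 (int s)) * int s) = int a1 * int s1 + (\<Sum>s\<in>S - {s1}. int (cnt ds0 (int s)) * int s)"
      unfolding a1_def using fS s1S by (simp add: sum.remove)
    also have "(\<Sum>s\<in>S - {s1}. int (cnt ds0 (int s)) * int s) = (\<Sum>s\<in>S - {s1}. int (a s) * int s)"
      using W(2) cs unfolding s1_def by (intro sum.cong) auto
    finally have e1: "(\<Sum>s\<in>S. int (cnt ds0 (int s)) * int s) = int a1 * int s1 + (\<Sum>s\<in>S - {s1}. int (a s) * int s)" .
    have "(\<Sum>t\<in>T. int (cnt ds0 (- int t)) * int t) = int b1 * int t1 + (\<Sum>t\<in>T - {t1}. int (cnt ds0 (- int t)) * int t)"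
      unfolding b1_def using fT t1T by (simp add: sum.remove)
    also have "(\<Sum>t\<in>T - {t1}. int (cnt ds0 (- int t)) * int t) = (\<Sum>t\<in>T - {t1}. int (b t) * int t)"
      using W(3) ct unfolding t1_def by (intro sum.cong) auto
    finally have e2: "(\<Sum>t\<in>T. int (cnt ds0 (- int t)) * int t) = int b1 * int t1 + (\<Sum>t\<in>T - {t1}. int (b t) * int t)" .
    define u0 where "u0 = v + sum_list ds0"
    have u0r: "1 \<le> u0" "u0 \<le> int n" using w0(1) wok_append[of n S T v ds0 "[]"] unfolding u0_def by auto
    have Aa: "a1 \<le> A" and Bb: "b1 \<le> B" using H cs ct unfolding a1_def b1_def s1_def t1_def by auto
    define x where "x = A - a1"
    define y where "y = B - b1"
    have eq: "u0 + int x * int s1 - int y * int t1 = v + int A * int (Min S) + (\<Sum>s\<in>S - {Min S}. int (a s) * int s)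
                   - int B * int (Min T) - (\<Sum>t\<in>T - {Min T}. int (b t) * int t)"
      unfolding u0_def sl e1 e2 x_def y_def using Aa Bb unfolding s1_def t1_def by (simp add: of_nat_diff algebra_simps)
    have st: "s1 + t1 \<le> n" using MT Tb t1T by force
    obtain tl where tl: "wok n S T u0 tl" "cnt tl (int s1) = x" "cnt tl (- int t1) = y" "set tl \<subseteq> {int s1, - int t1}"
      using greedy[OF s1S t1T s1p t1p st u0r, of x y] H eq by auto
    have tl0: "cnt tl z = 0" if "z \<noteq> int s1" "z \<noteq> - int t1" for z
      using tl(4) that unfolding cnt_def by (auto simp: filter_empty_conv)
    define W' where "W' = pth v (ds0 @ tl)"
    show "\<exists>W'. is_walk n S T v W'
                \<and> num_s_arcs W' (Min S) = A \<and> num_t_arcs W' (Min T) = B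
                \<and> (\<forall>s\<in>S - {Min S}. num_s_arcs W' s = a s)
                \<and> (\<forall>t\<in>T - {Min T}. num_t_arcs W' t = b t)"
    proof (intro exI[of _ W'] conjI ballI)
      show "is_walk n S T v W'" unfolding W'_def using w0(1) tl(1) wok_append u0_def by (intro wok_walk) auto
      show "num_s_arcs W' (Min S) = A" unfolding W'_def num_s_pth using tl(2) Aa
        unfolding x_def a1_def s1_def by simp
      show "num_t_arcs W' (Min T) = B" unfolding W'_def num_t_pth using tl(3) Bb
        unfolding y_def b1_def t1_def by simp
    next
      fix s assume s: "s \<in> S - {Min S}"
      then have "int s \<noteq> int s1" "int s \<noteq> - int t1" using S0 t1p unfolding s1_def by auto
      then show "num_s_arcs W' s = a s" unfolding W'_def num_s_pth using tl0 cs W(2) s by simp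
    next
      fix t assume t: "t \<in> T - {Min T}"
      then have "- int t \<noteq> int s1" "- int t \<noteq> - int t1" using T0 s1p unfolding t1_def by auto
      then show "num_t_arcs W' t = b t" unfolding W'_def num_t_pth using tl0 ct W(3) t by simp
    qed
  qed
  show ?thesis using partA partB unfolding c_def s1_def t1_def by blast
qed

end
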